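(* For every $t\ge0$ and ($\mathbb{P}$-almost every) $a\in\mathbb{R}^{Nd}$ in the support of the law of $x(0)$, \[ \int_\Omega x(t)\,d\mathbb{P}(x\mid x(0)=a)=e^{-\lambda t}a, \] i.e. $\mathbb{E}[x(t)\mid x(0)]=e^{-\lambda t}x(0)$ under $\mathbb{P}$.
   Context: Let $d\ge2$, $N\ge1$, $\lambda>0$, $\hat n\in\mathbb{R}^d$ a unit vector. For $1\le k\le N$, let $0<\tau_k^1<\tau_k^2<\cdots$ be arrival times of a rate-$\lambda$ Poisson process and $g_k^1,g_k^2,\dots$ Haar-distributed random matrices in $SO(d)$, all mutually independent. Define $\phi_k(t)=I$ for $t<\tau_k^1$ and $\phi_k(t)=g_k^n\cdots g_k^1$ for $t\in[\tau_k^n,\tau_k^{n+1})$. Let $\tau=\max_k\tau_k^1$, $\hat\phi_k(t)=\phi_k(t+\tau)$, and let $\psi(t)\in\mathbb{R}^{Nd}$ be obtained by stacking the vectors $\hat\phi_k(t)^{T}\hat n$, $k=1,\dots,N$; $\psi$ is a stationary process. Let $\Omega=D([0,\infty),\mathbb{R}^{Nd})$ (càdlàg paths) and let $\mathbb{P}$ be the law of $\psi$ on $\Omega$; $x$ denotes a generic element of $\Omega$. *)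

theory Defs
  imports "HOL-Probability.Probability"
begin

definition SO :: "(real^'d^'d) set" where
  "SO = {A. orthogonal_matrix A \<and> det A = 1}"

definition SO_haar :: "(real^'d^'d) measure \<Rightarrow> bool" where
  "SO_haar \<mu> \<longleftrightarrow> sets \<mu> = sets borel \<and> prob_space \<mu> \<and> emeasure \<mu> SO = 1 \<and>
     (\<forall>A\<in>SO. distr \<mu> borel (\<lambda>B. A ** B) = \<mu>)"

text \<open>Poisson process of the k-th particle from its exponential interarrival times
  e k 0, e k 1, ...: arrival k n = tau_k^n (n >= 1), and arrival k 0 = 0.\<close>
definition arrival :: "('k \<Rightarrow> nat \<Rightarrow> 'w \<Rightarrow> real) \<Rightarrow> 'k \<Rightarrow> nat \<Rightarrow> 'w \<Rightarrow> real" where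
  "arrival e k n w = (\<Sum>j<n. e k j w)"

definition jumps :: "('k \<Rightarrow> nat \<Rightarrow> 'w \<Rightarrow> real) \<Rightarrow> 'k \<Rightarrow> real \<Rightarrow> 'w \<Rightarrow> nat" where
  "jumps e k t w = card {n. 1 \<le> n \<and> arrival e k n w \<le> t}"

text \<open>gprod g k n w = g_k^n ... g_k^1 (g k 0 plays the role of g_k^1).\<close>
fun gprod :: "('k \<Rightarrow> nat \<Rightarrow> 'w \<Rightarrow> real^'d^'d) \<Rightarrow> 'k \<Rightarrow> nat \<Rightarrow> 'w \<Rightarrow> real^'d^'d" where
  "gprod g k 0 w = mat 1"
| "gprod g k (Suc n) w = g k n w ** gprod g k n w"

definition phi :: "('k \<Rightarrow> nat \<Rightarrow> 'w \<Rightarrow> real) \<Rightarrow> ('k \<Rightarrow> nat \<Rightarrow> 'w \<Rightarrow> real^'d^'d)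
    \<Rightarrow> 'k \<Rightarrow> real \<Rightarrow> 'w \<Rightarrow> real^'d^'d" where
  "phi e g k t w = gprod g k (jumps e k t w) w"

definition tau :: "('k::finite \<Rightarrow> nat \<Rightarrow> 'w \<Rightarrow> real) \<Rightarrow> 'w \<Rightarrow> real" where
  "tau e w = Max (range (\<lambda>k. arrival e k 1 w))"

definition psi :: "('k::finite \<Rightarrow> nat \<Rightarrow> 'w \<Rightarrow> real) \<Rightarrow> ('k \<Rightarrow> nat \<Rightarrow> 'w \<Rightarrow> real^'d^'d)
    \<Rightarrow> real^'d \<Rightarrow> real \<Rightarrow> 'w \<Rightarrow> real^'d^'k" where
  "psi e g nhat t w = (\<chi> k. transpose (phi e g k (t + tau e w) w) *v nhat)"

text \<open>Mutual independence of all interarrival times and all rotation matrices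
  (indep_vars unfolded, using a sum type as index set since the variables have different types).\<close>
definition all_indep :: "'w measure \<Rightarrow> ('k \<Rightarrow> nat \<Rightarrow> 'w \<Rightarrow> real)
    \<Rightarrow> ('k \<Rightarrow> nat \<Rightarrow> 'w \<Rightarrow> real^'d^'d) \<Rightarrow> bool" where
  "all_indep M e g \<longleftrightarrow> prob_space.indep_sets M
     (\<lambda>i. case i of
        Inl (k, n) \<Rightarrow> {e k n -` A \<inter> space M | A. A \<in> sets (borel :: real measure)}
      | Inr (k, n) \<Rightarrow> {g k n -` A \<inter> space M | A. A \<in> sets (borel :: (real^'d^'d) measure)})
     UNIV"

end

theory Submission
  imports Defs
begin

lemma vec_nth_meas[measurable]: "(\<lambda>x::'a::real_normed_vector^'n. x $ i) \<in> borel_measurable borel"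
  by (intro borel_measurable_continuous_onI continuous_on_component continuous_on_id)
lemma meas_vec:
  fixes f :: "'m \<Rightarrow> 'a::euclidean_space^'n"
  assumes "\<And>i. (\<lambda>x. f x $ i) \<in> borel_measurable M"
  shows "f \<in> borel_measurable M"
proof (subst borel_measurable_euclidean_space, intro ballI)
  fix b :: "'a^'n" assume "b \<in> Basis"
  then obtain i c where b: "b = axis i c" "c \<in> Basis" by (auto simp: Basis_vec_def)
  have "(\<lambda>x. f x \<bullet> b) = (\<lambda>x. f x $ i \<bullet> c)" by (simp add: b inner_axis)
  then show "(\<lambda>x. f x \<bullet> b) \<in> borel_measurable M" using assms[of i] by simp
qed
lemma meas_mm[measurable]:
  fixes f g :: "'m \<Rightarrow> real^'n^'n"
  assumes [measurable]: "f \<in> borel_measurable M" "g \<in> borel_measurable M"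
  shows "(\<lambda>x. f x ** g x) \<in> borel_measurable M"
  by (intro meas_vec) (simp add: matrix_matrix_mult_def)
lemma meas_tr[measurable]:
  fixes f :: "'m \<Rightarrow> real^'n^'n"
  assumes [measurable]: "f \<in> borel_measurable M"
  shows "(\<lambda>x. transpose (f x)) \<in> borel_measurable M"
  by (intro meas_vec) (simp add: transpose_def)
lemma meas_mv[measurable]:
  fixes f :: "'m \<Rightarrow> real^'n^'n"
  assumes [measurable]: "f \<in> borel_measurable M" "g \<in> borel_measurable M"
  shows "(\<lambda>x. f x *v g x) \<in> borel_measurable M"
  by (intro meas_vec) (simp add: matrix_vector_mult_def)
lemma meas_card:
  fixes P :: "nat \<Rightarrow> _ \<Rightarrow> bool"
  assumes P[measurable]: "\<And>n. Measurable.pred N (P n)"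
  shows "(\<lambda>w. card {n. P n w}) \<in> measurable N (count_space UNIV)"
proof (subst measurable_count_space_eq_countable, safe)
  fix m :: nat
  have eq: "card {n. P n w} = m \<longleftrightarrow> (m = 0 \<and> (\<forall>N. \<exists>n\<ge>N. P n w)) \<or>
        (\<exists>N. (\<forall>n\<ge>N. \<not> P n w) \<and> (\<exists>S\<in>Pow {..<N}. card S = m \<and> (\<forall>n<N. P n w \<longleftrightarrow> n \<in> S)))" for w
  proof
    assume m: "card {n. P n w} = m"
    show "(m = 0 \<and> (\<forall>N. \<exists>n\<ge>N. P n w)) \<or>
        (\<exists>N. (\<forall>n\<ge>N. \<not> P n w) \<and> (\<exists>S\<in>Pow {..<N}. card S = m \<and> (\<forall>n<N. P n w \<longleftrightarrow> n \<in> S)))"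
    proof (cases "finite {n. P n w}")
      case True
      then obtain N where N: "\<forall>n\<in>{n. P n w}. n < N" using finite_nat_bounded by (metis lessThan_iff subset_eq)
      then have "\<forall>n\<ge>N. \<not> P n w" by auto
      moreover have "{n. P n w} \<in> Pow {..<N}" using N by auto
      ultimately show ?thesis using m by (intro disjI2 exI[of _ N]) (auto intro!: bexI[of _ "{n. P n w}"])
    next
      case False
      then have "\<forall>N. \<exists>n\<ge>N. P n w" using infinite_nat_iff_unbounded_le by auto
      then show ?thesis using m False by simp
    qed
  next
    assume "(m = 0 \<and> (\<forall>N. \<exists>n\<ge>N. P n w)) \<or>
        (\<exists>N. (\<forall>n\<ge>N. \<not> P n w) \<and> (\<exists>S\<in>Pow {..<N}. card S = m \<and> (\<forall>n<N. P n w \<longleftrightarrow> n \<in> S)))"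
    then show "card {n. P n w} = m"
    proof
      assume "m = 0 \<and> (\<forall>N. \<exists>n\<ge>N. P n w)"
      then show ?thesis using infinite_nat_iff_unbounded_le by auto
    next
      assume "\<exists>N. (\<forall>n\<ge>N. \<not> P n w) \<and> (\<exists>S\<in>Pow {..<N}. card S = m \<and> (\<forall>n<N. P n w \<longleftrightarrow> n \<in> S))"
      then obtain N S where "\<forall>n\<ge>N. \<not> P n w" "S \<subseteq> {..<N}" "card S = m" "\<forall>n<N. P n w = (n \<in> S)" by blast
      then have "{n. P n w} = S" by (auto simp: not_le[symmetric])
      then show ?thesis using \<open>card S = m\<close> by simp
    qed
  qed
  have "Measurable.pred N (\<lambda>w. (m = 0 \<and> (\<forall>N. \<exists>n\<ge>N. P n w)) \<or>
        (\<exists>N. (\<forall>n\<ge>N. \<not> P n w) \<and> (\<exists>S\<in>Pow {..<N}. card S = m \<and> (\<forall>n<N. P n w \<longleftrightarrow> n \<in> S))))"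
    by measurable
  then have "Measurable.pred N (\<lambda>w. card {n. P n w} = m)"
    by (simp add: eq)
  then show "(\<lambda>w. card {n. P n w}) -` {m} \<inter> space N \<in> sets N"
    by (simp add: pred_def vimage_def Int_def conj_commute)
qed simp_all

context
  fixes N :: "'w measure" and e :: "'k::finite \<Rightarrow> nat \<Rightarrow> 'w \<Rightarrow> real" and g :: "'k \<Rightarrow> nat \<Rightarrow> 'w \<Rightarrow> real^'d^'d"
  assumes em[measurable]: "\<And>k n. e k n \<in> borel_measurable N"
    and gm[measurable]: "\<And>k n. g k n \<in> borel_measurable N"
begin

lemma meas_arrival[measurable]: "arrival e k n \<in> borel_measurable N"
  unfolding arrival_def by measurable

lemma meas_tau[measurable]: "tau e \<in> borel_measurable N"
  unfolding tau_def by measurable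

lemma meas_jumps[measurable]:
  assumes [measurable]: "s \<in> borel_measurable N"
  shows "(\<lambda>w. jumps e k (s w) w) \<in> measurable N (count_space UNIV)"
  unfolding jumps_def by (rule meas_card) measurable

lemma meas_gprod[measurable]: "gprod g k n \<in> borel_measurable N"
  by (induction n) auto

lemma meas_gprod_rand[measurable]:
  assumes "J \<in> measurable N (count_space UNIV)"
  shows "(\<lambda>w. gprod g k (J w) w) \<in> borel_measurable N"
  by (rule measurable_compose_countable[OF _ assms]) simp

lemma meas_psi[measurable]: "psi e g nhat t \<in> borel_measurable N"
  unfolding psi_def phi_def
  by (intro meas_vec) (simp only: vec_lambda_beta, measurable)

end


lemma haar_mean0:
  fixes \<mu> :: "(real^'d^'d) measure"
  assumes d2: "CARD('d) \<ge> 2" and H: "SO_haar \<mu>"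
  shows "(\<integral>B. B$b$a \<partial>\<mu>) = 0"
proof -
  obtain b' :: 'd where bb: "b' \<noteq> b"
  proof -
    have "\<not> (UNIV :: 'd set) \<subseteq> {b}"
    proof
      assume "(UNIV :: 'd set) \<subseteq> {b}"
      then have "card (UNIV :: 'd set) \<le> card {b}" by (intro card_mono) auto
      then show False using d2 by simp
    qed
    then show ?thesis using that by auto
  qed
  define sg :: "'d \<Rightarrow> real" where "sg i = (if i = b \<or> i = b' then -1 else 1)" for i
  define D :: "real^'d^'d" where "D = (\<chi> i j. if i = j then sg i else 0)"
  have Dmul: "(D ** B)$i$j = sg i * B$i$j" for B :: "real^'d^'d" and i j
  proof -
    have "(D ** B)$i$j = (\<Sum>k\<in>UNIV. (if i = k then sg i else 0) * B $ k $ j)"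
      unfolding matrix_matrix_mult_def D_def by simp
    also have "\<dots> = (\<Sum>l\<in>UNIV. if i = l then sg i * B$i$j else 0)"
      by (rule sum.cong) auto
    finally show ?thesis by simp
  qed
  have sg2: "sg i * sg i = 1" for i by (simp add: sg_def)
  have "transpose D = D" by (simp add: D_def transpose_def vec_eq_iff)
  moreover have "D ** D = mat 1" by (simp add: vec_eq_iff Dmul) (simp add: D_def mat_def sg2)
  ultimately have "orthogonal_matrix D" unfolding orthogonal_matrix by simp
  moreover have "det D = 1"
  proof -
    have "det D = (\<Prod>i\<in>UNIV. D$i$i)" by (rule det_diagonal) (simp add: D_def)
    also have "\<dots> = (\<Prod>i\<in>UNIV. if i \<in> {b, b'} then -1 else 1)" by (simp add: D_def sg_def)
    also have "\<dots> = (\<Prod>i\<in>{b,b'}. -1)"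
      by (rule prod.mono_neutral_cong_right) auto
    also have "\<dots> = 1" using bb by simp
    finally show ?thesis .
  qed
  ultimately have DSO: "D \<in> SO" by (simp add: SO_def)
  have sets: "sets \<mu> = sets borel" using H unfolding SO_haar_def by blast
  have "\<forall>A\<in>SO. distr \<mu> borel (\<lambda>B. A ** B) = \<mu>" using H unfolding SO_haar_def by blast
  then have inv: "distr \<mu> borel (\<lambda>B. D ** B) = \<mu>" using DSO by blast
  have "(\<lambda>B::real^'d^'d. D ** B) \<in> measurable borel borel" by (rule meas_mm[of "\<lambda>_. D" borel "\<lambda>B::real^'d^'d. B", OF measurable_const]) measurable
  then have mb: "(\<lambda>B. D ** B) \<in> measurable \<mu> borel"
    by (subst measurable_cong_sets[OF sets refl])
  have "(\<integral>B. B$b$a \<partial>\<mu>) = (\<integral>B. B$b$a \<partial>(distr \<mu> borel (\<lambda>B. D ** B)))" by (simp only: inv)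
  also have "\<dots> = (\<integral>B. (D ** B)$b$a \<partial>\<mu>)" by (rule integral_distr[OF mb]) measurable
  also have "\<dots> = (\<integral>B. - (B$b$a) \<partial>\<mu>)"
    by (rule Bochner_Integration.integral_cong) (simp_all add: Dmul sg_def)
  finally show ?thesis by simp
qed


lemma (in prob_space) split_indep:
  fixes f :: "'c \<times> 'c \<Rightarrow> real"
  assumes ind: "indep_var S Z T Y" and f[measurable]: "f \<in> borel_measurable (S \<Otimes>\<^sub>M T)"
    and bnd: "\<And>p. p \<in> space (S \<Otimes>\<^sub>M T) \<Longrightarrow> \<bar>f p\<bar> \<le> C"
  shows "(\<integral>\<omega>. f (Z \<omega>, Y \<omega>) \<partial>M) = (\<integral>\<omega>. (\<integral>y. f (Z \<omega>, y) \<partial>distr M T Y) \<partial>M)"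
proof -
  have rZ[measurable]: "Z \<in> measurable M S" and rY[measurable]: "Y \<in> measurable M T"
    and eq: "distr M S Z \<Otimes>\<^sub>M distr M T Y = distr M (S \<Otimes>\<^sub>M T) (\<lambda>x. (Z x, Y x))"
    using ind unfolding indep_var_distribution_eq by auto
  interpret MZ: prob_space "distr M S Z" by (rule prob_space_distr) simp
  interpret MY: prob_space "distr M T Y" by (rule prob_space_distr) simp
  interpret P: pair_prob_space "distr M S Z" "distr M T Y" ..
  have fP[measurable]: "f \<in> borel_measurable (distr M S Z \<Otimes>\<^sub>M distr M T Y)"
    using f by (simp add: measurable_cong_sets[OF sets_pair_measure_cong[OF sets_distr sets_distr] refl])
  have int: "integrable (distr M S Z \<Otimes>\<^sub>M distr M T Y) f"
    by (rule P.integrable_const_bound[where B=C]) (auto intro!: AE_I2 bnd simp: space_pair_measure)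
  have "(\<integral>\<omega>. f (Z \<omega>, Y \<omega>) \<partial>M) = integral\<^sup>L (distr M (S \<Otimes>\<^sub>M T) (\<lambda>x. (Z x, Y x))) f"
    by (rule integral_distr[symmetric]) measurable
  also have "\<dots> = integral\<^sup>L (distr M S Z \<Otimes>\<^sub>M distr M T Y) f" by (simp only: eq)
  also have "\<dots> = (\<integral>z. (\<integral>y. f (z, y) \<partial>distr M T Y) \<partial>distr M S Z)"
    by (rule P.integral_fst'[symmetric, OF int])
  also have "\<dots> = (\<integral>\<omega>. (\<integral>y. f (Z \<omega>, y) \<partial>distr M T Y) \<partial>M)"
  proof (rule integral_distr)
    show "(\<lambda>z. \<integral>y. f (z, y) \<partial>distr M T Y) \<in> borel_measurable S"
      by (rule MY.borel_measurable_lebesgue_integral) (simp add: measurable_cong_sets[OF sets_pair_measure_cong[OF refl sets_distr] refl])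
  qed simp
  finally show ?thesis .
qed


lemma arrival_0[simp]: "arrival e k 0 w = 0" by (simp add: arrival_def)
lemma arrival_Suc: "arrival e k (Suc n) w = arrival e k n w + e k n w" by (simp add: arrival_def)

lemma arrival_mono_strict:
  assumes pos: "\<forall>n. e k n w > 0" and "a < b"
  shows "arrival e k a w < arrival e k b w"
  using \<open>a < b\<close>
proof (induction b)
  case 0 then show ?case by simp
next
  case (Suc b)
  then show ?case using pos[rule_format, of b]
    by (cases "a = b") (auto simp: arrival_Suc)
qed

lemma arrival_mono:
  assumes pos: "\<forall>n. e k n w > 0" and "a \<le> b"
  shows "arrival e k a w \<le> arrival e k b w"
  using arrival_mono_strict[of e k w a b] assms by (cases "a = b") auto

lemma jumps_eq:
  assumes pos: "\<forall>n. e k n w > 0" and j: "arrival e k j w \<le> s" "s < arrival e k (Suc j) w"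
  shows "jumps e k s w = j"
proof -
  have "{n. 1 \<le> n \<and> arrival e k n w \<le> s} = {1..j}"
  proof (intro set_eqI iffI)
    fix n assume "n \<in> {n. 1 \<le> n \<and> arrival e k n w \<le> s}"
    then have "n \<le> j" using arrival_mono[of e k w "Suc j" n] pos j by (cases "n \<le> j") auto
    then show "n \<in> {1..j}" using \<open>n \<in> _\<close> by auto
  next
    fix n assume "n \<in> {1..j}"
    then show "n \<in> {n. 1 \<le> n \<and> arrival e k n w \<le> s}" using arrival_mono[of e k w n j] pos j by auto
  qed
  then show ?thesis by (simp add: jumps_def)
qed

lemma exists_bracket:
  assumes "arrival e k 0 w \<le> s" "arrival e k n w > s"
  shows "\<exists>j. arrival e k j w \<le> s \<and> s < arrival e k (Suc j) w"
  using assms(2)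
proof (induction n)
  case 0 then show ?case using assms(1) by simp
next
  case (Suc n)
  show ?case
  proof (cases "arrival e k n w > s")
    case True then show ?thesis using Suc.IH by blast
  next
    case False then show ?thesis using Suc.prems by (auto simp: not_less)
  qed
qed

fun gprodR :: "('k \<Rightarrow> nat \<Rightarrow> 'w \<Rightarrow> real^'d^'d) \<Rightarrow> 'k \<Rightarrow> nat \<Rightarrow> nat \<Rightarrow> 'w \<Rightarrow> real^'d^'d" where
  "gprodR g k a 0 w = mat 1"
| "gprodR g k a (Suc b) w = (if a \<le> b then g k b w ** gprodR g k a b w else mat 1)"

lemma gprod_split:
  "a \<le> b \<Longrightarrow> gprod g k b w = gprodR g k a b w ** gprod g k a w"
proof (induction b)
  case 0 then show ?case by simp
next
  case (Suc b)
  show ?case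
  proof (cases "a = Suc b")
    case True
    have "gprodR g k (Suc b) b w = mat 1" by (cases b) auto
    then show ?thesis using True by (simp add: matrix_mul_lid)
  next
    case False
    then have "a \<le> b" using Suc.prems by simp
    then show ?thesis using Suc.IH by (simp add: matrix_mul_assoc)
  qed
qed

lemma SO_mul: "A \<in> SO \<Longrightarrow> B \<in> SO \<Longrightarrow> A ** B \<in> SO"
  by (simp add: SO_def orthogonal_matrix_mul det_mul)

lemma SO_id: "mat 1 \<in> SO"
  by (simp add: SO_def orthogonal_matrix_id)

lemma gprod_SO: "(\<And>j. j < n \<Longrightarrow> g k j w \<in> SO) \<Longrightarrow> gprod g k n w \<in> SO"
  by (induction n) (auto intro: SO_mul SO_id)

lemma gprodR_SO: "(\<And>j. a \<le> j \<Longrightarrow> j < b \<Longrightarrow> g k j w \<in> SO) \<Longrightarrow> gprodR g k a b w \<in> SO"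
  by (induction b) (auto intro: SO_mul SO_id)

lemma gprod_cong: "(\<And>j. j < n \<Longrightarrow> g k j w = g' k j w') \<Longrightarrow> gprod g k n w = gprod g' k n w'"
  by (induction n) auto

lemma gprodR_cong: "(\<And>j. a \<le> j \<Longrightarrow> j < b \<Longrightarrow> g k j w = g' k j w') \<Longrightarrow> gprodR g k a b w = gprodR g' k a b w'"
  by (induction b) auto

lemma SO_entry: assumes "Q \<in> SO" shows "\<bar>Q$a$b\<bar> \<le> 1"
proof -
  have "orthogonal_matrix Q" using assms by (simp add: SO_def)
  then have "transpose Q ** Q = mat 1" by (simp add: orthogonal_matrix)
  then have "(transpose Q ** Q)$b$b = 1" by (simp add: mat_def)
  then have s: "(\<Sum>c\<in>UNIV. Q$c$b * Q$c$b) = 1" by (simp add: matrix_matrix_mult_def transpose_def)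
  have "Q$a$b * Q$a$b \<le> (\<Sum>c\<in>UNIV. Q$c$b * Q$c$b)"
    by (rule member_le_sum) auto
  then have "Q$a$b * Q$a$b \<le> 1" using s by simp
  then show ?thesis by (simp add: abs_square_le_1 power2_eq_square[symmetric])
qed

lemma SO_vec: assumes "Q \<in> SO" "norm (v::real^'d) = 1" shows "\<bar>(transpose Q *v v)$b\<bar> \<le> 1"
proof -
  have "orthogonal_matrix (transpose Q)" using assms by (simp add: SO_def)
  then have "orthogonal_transformation (\<lambda>x. transpose Q *v x)"
    unfolding orthogonal_transformation_matrix matrix_of_matrix_vector_mul
    using matrix_vector_mul_linear by blast
  then have "norm (transpose Q *v v) = 1" using assms(2) orthogonal_transformation_norm by metis
  then show ?thesis using component_le_norm_cart[of "transpose Q *v v" b] by simp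
qed


type_synonym ('k, 'd) coord = "('k \<times> nat) + ('k \<times> nat) \<Rightarrow> real^'d^'d"

definition ee :: "'k \<Rightarrow> nat \<Rightarrow> ('k, 'd::finite) coord \<Rightarrow> real" where
  "ee k n x = x (Inl (k, n)) $ undefined $ undefined"
definition gg :: "'k \<Rightarrow> nat \<Rightarrow> ('k, 'd::finite) coord \<Rightarrow> real^'d^'d" where
  "gg k n x = x (Inr (k, n))"
definition Xv :: "('k \<Rightarrow> nat \<Rightarrow> 'w \<Rightarrow> real) \<Rightarrow> ('k \<Rightarrow> nat \<Rightarrow> 'w \<Rightarrow> real^'d^'d) \<Rightarrow> ('k \<times> nat) + ('k \<times> nat) \<Rightarrow> 'w \<Rightarrow> real^'d^'d" where
  "Xv e g i w = (case i of Inl (k, n) \<Rightarrow> e k n w *\<^sub>R mat 1 | Inr (k, n) \<Rightarrow> g k n w)"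

lemma ee_Xv[simp]: "ee k n (\<lambda>i. Xv e g i w) = e k n w"
  by (simp add: ee_def Xv_def mat_def)
lemma gg_Xv[simp]: "gg k n (\<lambda>i. Xv e g i w) = g k n w"
  by (simp add: gg_def Xv_def)

lemma psi_cong:
  assumes "\<And>k n. e k n w = e' k n w'" "\<And>k n. g k n w = g' k n w'"
  shows "psi e g nhat t w = psi e' g' nhat t w'"
proof -
  have a: "arrival e k n w = arrival e' k n w'" for k n by (simp add: arrival_def assms)
  have ta: "tau e w = tau e' w'" by (simp add: tau_def a)
  have j: "jumps e k s w = jumps e' k s w'" for k s by (simp add: jumps_def a)
  show ?thesis unfolding psi_def phi_def ta j
    by (simp add: gprod_cong[of _ g k w g' w' for k] assms)
qed

lemma psi_transfer: "psi e g nhat t w = psi ee gg nhat t (\<lambda>i. Xv e g i w)"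
  by (rule psi_cong) simp_all

abbreviation PB :: "('k, 'd::finite) coord measure" where "PB \<equiv> Pi\<^sub>M UNIV (\<lambda>_. borel)"

lemma ee_meas[measurable]: "ee k n \<in> borel_measurable (PiM I (\<lambda>_. borel))" if "Inl (k,n) \<in> I"
  unfolding ee_def using that by measurable
lemma gg_meas[measurable]: "gg k n \<in> borel_measurable (PiM I (\<lambda>_. borel))" if "Inr (k,n) \<in> I"
  unfolding gg_def using that by measurable


locale setting = prob_space M for M :: "'w measure" +
  fixes e :: "'k::finite \<Rightarrow> nat \<Rightarrow> 'w \<Rightarrow> real" and g :: "'k \<Rightarrow> nat \<Rightarrow> 'w \<Rightarrow> real^'d^'d"
    and nhat :: "real^'d" and lam :: real
  assumes d2: "CARD('d) \<ge> 2" and lam: "lam > 0" and nh: "norm nhat = 1"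
    and ed: "\<And>k n. distributed M lborel (e k n) (exponential_density lam)"
    and gm[measurable]: "\<And>k n. g k n \<in> borel_measurable M"
    and gh: "\<And>k n. SO_haar (distr M borel (g k n))"
    and ind: "all_indep M e g"
begin

lemma em[measurable]: "e k n \<in> borel_measurable M"
  using distributed_measurable[OF ed[of k n]] by simp

definition XX :: "'w \<Rightarrow> ('k, 'd) coord" where "XX w = (\<lambda>i. Xv e g i w)"

lemma Xv_meas[measurable]: "Xv e g i \<in> borel_measurable M"
  unfolding Xv_def by (cases i) (auto split: prod.splits)

lemma XX_meas[measurable]: "XX \<in> measurable M PB"
  unfolding XX_def by (rule measurable_PiM_single') auto

lemma SO_sets: "(SO :: (real^'d^'d) set) \<in> sets borel"
proof -
  have "emeasure (distr M borel (g undefined 0)) (SO :: (real^'d^'d) set) = 1" using gh[of undefined 0] by (simp add: SO_haar_def)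
  then show ?thesis
  proof (rule contrapos_pp)
    assume "(SO :: (real^'d^'d) set) \<notin> sets borel"
    then have h: "(SO :: (real^'d^'d) set) \<notin> sets (distr M borel (g undefined 0))" by simp
    show "emeasure (distr M borel (g undefined 0)) (SO :: (real^'d^'d) set) \<noteq> 1" using emeasure_notin_sets[OF h] by simp
  qed
qed

lemma indep_X: "indep_vars (\<lambda>_. borel) (Xv e g) UNIV"
  unfolding indep_vars_def2
proof safe
  show "indep_sets (\<lambda>i. {Xv e g i -` A \<inter> space M |A. A \<in> sets borel}) UNIV"
    using ind unfolding all_indep_def
  proof (rule indep_sets_mono_sets)
    fix i :: "('k \<times> nat) + ('k \<times> nat)"
    show "{Xv e g i -` A \<inter> space M |A. A \<in> sets borel} \<subseteq> (case i of
        Inl (k, n) \<Rightarrow> {e k n -` A \<inter> space M | A. A \<in> sets (borel :: real measure)}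
      | Inr (k, n) \<Rightarrow> {g k n -` A \<inter> space M | A. A \<in> sets (borel :: (real^'d^'d) measure)})"
    proof (cases i)
      case (Inl a)
      obtain k n where a: "a = (k, n)" by force
      have "(\<lambda>r::real. r *\<^sub>R (mat 1 :: real^'d^'d)) \<in> borel_measurable borel" by measurable
      then have "(\<lambda>r::real. r *\<^sub>R (mat 1 :: real^'d^'d)) -` A \<in> sets borel" if "A \<in> sets borel" for A
        using measurable_sets[OF _ that, of "\<lambda>r::real. r *\<^sub>R (mat 1 :: real^'d^'d)" borel] by simp
      moreover have "Xv e g i -` A \<inter> space M = e k n -` ((\<lambda>r::real. r *\<^sub>R (mat 1 :: real^'d^'d)) -` A) \<inter> space M" for A
        by (auto simp: Xv_def Inl a)
      ultimately show ?thesis unfolding Inl a by (simp only: sum.case prod.case) blast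
    next
      case (Inr a)
      obtain k n where a: "a = (k, n)" by force
      have "Xv e g i -` A \<inter> space M = g k n -` A \<inter> space M" for A
        by (auto simp: Xv_def Inr a)
      then show ?thesis unfolding Inr a by (simp only: sum.case prod.case)
    qed
  qed
qed (auto intro: Xv_meas)

lemma AE_pos: "AE w in M. \<forall>k n. e k n w > 0"
proof -
  have "AE w in M. e k n w > 0" for k n
  proof -
    have "prob {w \<in> space M. 0 < e k n w} = 1"
      using exponential_distributedD_gt[OF ed[of k n] order_refl lam] by simp
    from AE_prob_1[OF this] show ?thesis by eventually_elim simp
  qed
  then have "\<forall>k\<in>UNIV. AE w in M. \<forall>n. e k n w > 0" by (simp add: AE_all_countable)
  then have "AE w in M. \<forall>k\<in>UNIV. \<forall>n. e k n w > 0"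
    by (intro AE_ball_countable') (auto intro: countable_finite)
  then show ?thesis by simp
qed

lemma AE_SO: "AE w in M. \<forall>k n. g k n w \<in> SO"
proof -
  have "AE w in M. g k n w \<in> SO" for k n
  proof -
    have "emeasure (distr M borel (g k n)) SO = 1" using gh[of k n] by (simp add: SO_haar_def)
    then have "emeasure M (g k n -` SO \<inter> space M) = 1"
      by (simp add: emeasure_distr SO_sets)
    then have "prob (g k n -` SO \<inter> space M) = 1" by (simp add: emeasure_eq_measure)
    from AE_prob_1[OF this] show ?thesis by eventually_elim simp
  qed
  then have "\<forall>k\<in>UNIV. AE w in M. \<forall>n. g k n w \<in> SO" by (simp add: AE_all_countable)
  then have "AE w in M. \<forall>k\<in>UNIV. \<forall>n. g k n w \<in> SO"
    by (intro AE_ball_countable') (auto intro: countable_finite)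
  then show ?thesis by simp
qed

lemma prob_all_le:
  assumes "n \<ge> 1" and c: "c \<ge> 0"
  shows "prob (\<Inter>j<n. e k j -` {..c} \<inter> space M) = (1 - exp (- c * lam)) ^ n"
proof -
  define A where "A i = (case i of Inl (k', j) \<Rightarrow> e k' j -` {..c} \<inter> space M | Inr _ \<Rightarrow> {})" for i :: "('k \<times> nat) + ('k \<times> nat)"
  define J where "J = (\<lambda>j. Inl (k, j) :: ('k \<times> nat) + ('k \<times> nat)) ` {..<n}"
  have inj: "inj_on (\<lambda>j. Inl (k, j) :: ('k \<times> nat) + ('k \<times> nat)) {..<n}" by (auto simp: inj_on_def)
  have "prob (\<Inter>i\<in>J. A i) = (\<Prod>i\<in>J. prob (A i))"
  proof (rule indep_setsD[OF ind[unfolded all_indep_def]])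
    have "Inl (k, 0) \<in> J" using assms by (auto simp: J_def)
    then show "J \<noteq> {}" by blast
    show "finite J" by (simp add: J_def)
    show "\<forall>j\<in>J. A j \<in> (case j of
        Inl (k, n) \<Rightarrow> {e k n -` A \<inter> space M | A. A \<in> sets (borel :: real measure)}
      | Inr (k, n) \<Rightarrow> {g k n -` A \<inter> space M | A. A \<in> sets (borel :: (real^'d^'d) measure)})"
      by (auto simp: J_def A_def intro!: exI[of _ "{..c}"])
  qed simp
  moreover have "(\<Inter>i\<in>J. A i) = (\<Inter>j<n. e k j -` {..c} \<inter> space M)" by (simp add: J_def A_def)
  moreover have "(\<Prod>i\<in>J. prob (A i)) = (\<Prod>j<n. prob (e k j -` {..c} \<inter> space M))"
    by (simp add: J_def prod.reindex[OF inj] A_def)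
  moreover have "prob (e k j -` {..c} \<inter> space M) = 1 - exp (- c * lam)" for j
  proof -
    have "prob {x \<in> space M. e k j x \<le> c} = 1 - exp (- c * lam)"
      using exponential_distributedD_le[OF ed[of k j] c lam] by simp
    moreover have "{x \<in> space M. e k j x \<le> c} = e k j -` {..c} \<inter> space M" by auto
    ultimately show ?thesis by simp
  qed
  ultimately show ?thesis by simp
qed

lemma AE_unb1: "AE w in M. \<exists>n. arrival e k n w > real c"
proof -
  define q where "q = 1 - exp (- real c * lam)"
  have q: "0 \<le> q" "q < 1" using lam by (auto simp: q_def)
  define B where "B = {w \<in> space M. (\<forall>n. arrival e k n w \<le> real c) \<and> (\<forall>n. e k n w > 0)}"
  have Bm: "B \<in> sets M" unfolding B_def by measurable
  have "prob B \<le> q ^ n" if "n \<ge> 1" for n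
  proof -
    have "B \<subseteq> (\<Inter>j<n. e k j -` {..real c} \<inter> space M)"
    proof (intro subsetI INT_I)
      fix w j assume w: "w \<in> B" and "j \<in> {..<n}"
      then have "e k j w \<le> arrival e k (Suc j) w" using arrival_mono[of e k w 0 j]
        by (auto simp: B_def arrival_Suc)
      then show "w \<in> e k j -` {..real c} \<inter> space M" using w by (auto simp: B_def) (smt (verit))
    qed
    have "0 \<in> {..<n}" using that by simp
    then have ne: "{..<n} \<noteq> {}" by blast
    have "prob B \<le> prob (\<Inter>j<n. e k j -` {..real c} \<inter> space M)"
      using \<open>B \<subseteq> _\<close> by (intro finite_measure_mono) (auto intro!: sets.countable_INT' simp: ne)
    also have "\<dots> = q ^ n" using prob_all_le[OF that, of "real c" k] by (simp add: q_def)
    finally show ?thesis .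
  qed
  then have "prob B \<le> 0"
    by (intro tendsto_le[OF trivial_limit_sequentially LIMSEQ_power_zero[of q] tendsto_const])
       (use q in \<open>auto simp: eventually_sequentially intro!: exI[of _ 1]\<close>)
  then have "B \<in> null_sets M" using Bm by (simp add: measure_le_0_iff emeasure_eq_measure null_sets_def)
  then have "AE w in M. w \<notin> B" by (rule AE_not_in)
  then show ?thesis using AE_pos AE_space
    by eventually_elim (auto simp: B_def not_le)
qed

lemma AE_unb: "AE w in M. \<forall>k. \<forall>c::real. \<exists>n. arrival e k n w > c"
proof -
  have "\<forall>k\<in>UNIV. AE w in M. \<forall>c::nat. \<exists>n. arrival e k n w > real c"
    using AE_unb1 by (simp add: AE_all_countable)
  then have "AE w in M. \<forall>k\<in>UNIV. \<forall>c::nat. \<exists>n. arrival e k n w > real c"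
    by (intro AE_ball_countable') (auto intro: countable_finite)
  then show ?thesis
  proof eventually_elim
    case (elim w)
    show ?case
    proof (intro allI)
      fix k and c :: real
      obtain m :: nat where "c < real m" using reals_Archimedean2 by blast
      then show "\<exists>n. arrival e k n w > c" using elim by (meson less_trans UNIV_I)
    qed
  qed
qed

end


context setting begin

lemma split_coord:
  fixes F :: "('k, 'd) coord \<Rightarrow> real"
  assumes Fm[measurable]: "F \<in> borel_measurable PB" and Fb: "\<And>x. \<bar>F x\<bar> \<le> C"
  shows "(\<integral>\<omega>. F (XX \<omega>) \<partial>M) = (\<integral>\<omega>. (\<integral>\<omega>'. F ((XX \<omega>)(i0 := XX \<omega>' i0)) \<partial>M) \<partial>M)"
proof -
  define K where "K = UNIV - {i0}"
  define Z where "Z \<omega> = restrict (\<lambda>i. Xv e g i \<omega>) K" for \<omega>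
  define Y where "Y \<omega> = restrict (\<lambda>i. Xv e g i \<omega>) {i0}" for \<omega>
  have iv: "indep_var (PiM K (\<lambda>_. borel)) Z (PiM {i0} (\<lambda>_. borel)) Y"
    unfolding Z_def Y_def by (rule indep_var_restrict[OF indep_X]) (auto simp: K_def)
  define f where "f p = F ((fst p)(i0 := snd p i0))" for p :: "('k, 'd) coord \<times> ('k, 'd) coord"
  have upd_meas: "(\<lambda>p. (fst p)(i0 := snd p i0)) \<in> measurable (PiM K (\<lambda>_. borel) \<Otimes>\<^sub>M PiM {i0} (\<lambda>_. borel)) PB"
  proof (rule measurable_PiM_single')
    fix i :: "('k \<times> nat) + ('k \<times> nat)"
    show "(\<lambda>p. ((fst p)(i0 := snd p i0)) i) \<in> measurable (PiM K (\<lambda>_. borel) \<Otimes>\<^sub>M PiM {i0} (\<lambda>_. borel)) borel"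
    proof (cases "i = i0")
      case True then show ?thesis by simp measurable
    next
      case False then have "i \<in> K" by (simp add: K_def)
      with False show ?thesis by simp measurable
    qed
  qed simp
  have fm: "f \<in> borel_measurable (PiM K (\<lambda>_. borel) \<Otimes>\<^sub>M PiM {i0} (\<lambda>_. borel))"
    unfolding f_def using measurable_compose[OF upd_meas Fm] by (simp add: comp_def)
  have "(\<integral>\<omega>. f (Z \<omega>, Y \<omega>) \<partial>M) = (\<integral>\<omega>. (\<integral>y. f (Z \<omega>, y) \<partial>distr M (PiM {i0} (\<lambda>_. borel)) Y) \<partial>M)"
    by (rule split_indep[OF iv fm, where C=C]) (simp add: f_def Fb)
  moreover have "f (Z \<omega>, Y \<omega>) = F (XX \<omega>)" for \<omega>
  proof -
    have "(Z \<omega>)(i0 := Y \<omega> i0) = XX \<omega>" by (auto simp: Z_def Y_def K_def XX_def)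
    then show ?thesis by (simp add: f_def)
  qed
  moreover have "(\<integral>y. f (Z \<omega>, y) \<partial>distr M (PiM {i0} (\<lambda>_. borel)) Y) = (\<integral>\<omega>'. F ((XX \<omega>)(i0 := XX \<omega>' i0)) \<partial>M)" for \<omega>
  proof -
    have Ym: "Y \<in> measurable M (PiM {i0} (\<lambda>_. borel))" unfolding Y_def by (rule measurable_restrict) simp
    have "(\<lambda>y. f (Z \<omega>, y)) \<in> borel_measurable (PiM {i0} (\<lambda>_. borel))"
      by (rule measurable_Pair2[OF fm]) (simp add: Z_def space_PiM)
    then have "(\<integral>y. f (Z \<omega>, y) \<partial>distr M (PiM {i0} (\<lambda>_. borel)) Y) = (\<integral>\<omega>'. f (Z \<omega>, Y \<omega>') \<partial>M)"
      by (rule integral_distr[OF Ym])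
    moreover have "(Z \<omega>)(i0 := Y \<omega>' i0) = (XX \<omega>)(i0 := XX \<omega>' i0)" for \<omega>'
      by (auto simp: Z_def Y_def K_def XX_def)
    ultimately show ?thesis by (simp add: f_def)
  qed
  ultimately show ?thesis by simp
qed

end


definition good :: "('k::finite, 'd::finite) coord \<Rightarrow> bool" where
  "good x \<longleftrightarrow> (\<forall>k n. ee k n x > 0) \<and> (\<forall>k n. gg k n x \<in> SO) \<and> (\<forall>k (c::nat). \<exists>n. arrival ee k n x > real c)"

definition Dm :: "('k::finite \<Rightarrow> nat) \<Rightarrow> ('k, 'd::finite) coord \<Rightarrow> bool" where
  "Dm m x \<longleftrightarrow> (\<forall>k'. arrival ee k' (m k') x \<le> tau ee x \<and> tau ee x < arrival ee k' (Suc (m k')) x)"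

definition psi0m :: "real^'d \<Rightarrow> ('k::finite \<Rightarrow> nat) \<Rightarrow> ('k, 'd::finite) coord \<Rightarrow> real^'d^'k" where
  "psi0m nhat m x = (\<chi> k'. transpose (gprod gg k' (m k') x) *v nhat)"

definition clip :: "real \<Rightarrow> real" where "clip v = max (-1) (min 1 v)"

lemma clip_id: "\<bar>v\<bar> \<le> 1 \<Longrightarrow> clip v = v" by (auto simp: clip_def)
lemma clip_bound: "\<bar>clip v\<bar> \<le> 1" by (auto simp: clip_def)
lemma clip_meas[measurable]: "clip \<in> borel_measurable borel" unfolding clip_def by measurable

lemma arr1_le_tau: "arrival e k 1 w \<le> tau (e :: 'k::finite \<Rightarrow> _) w"
  unfolding tau_def by (rule Max_ge) auto

lemma good_pos: "good x \<Longrightarrow> \<forall>n. ee k n x > 0" by (simp add: good_def)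

lemma tau_pos: "good x \<Longrightarrow> tau ee x > 0"
  using arr1_le_tau[of ee k x for k] good_pos[of x] by (simp add: arrival_def) (meson less_le_trans)

lemma Dm_ex: assumes "good x" shows "\<exists>m. Dm m x"
proof -
  have "\<exists>j. arrival ee k' j x \<le> tau ee x \<and> tau ee x < arrival ee k' (Suc j) x" for k'
  proof -
    obtain c :: nat where "tau ee x < real c" using reals_Archimedean2 by blast
    moreover obtain n where "arrival ee k' n x > real c" using assms unfolding good_def by blast
    ultimately have "arrival ee k' n x > tau ee x" by simp
    then show ?thesis using exists_bracket[of ee k' x "tau ee x" n] tau_pos[OF assms] by simp
  qed
  then show ?thesis unfolding Dm_def by metis
qed

lemma Dm_jumps: assumes "good x" "Dm m x" shows "jumps ee k' (tau ee x) x = m k'"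
  using assms by (intro jumps_eq) (auto simp: good_def Dm_def)

lemma Dm_uniq: "good x \<Longrightarrow> Dm m x \<Longrightarrow> Dm m' x \<Longrightarrow> m = m'"
  using Dm_jumps by (metis ext)

lemma K1: assumes "good x" "Dm m x" shows "psi ee gg nhat 0 x = psi0m nhat m x"
  using Dm_jumps[OF assms] by (simp add: psi_def psi0m_def phi_def)

lemma K2: assumes "good x" "Dm m x" "0 \<le> t" "tau ee x + t < arrival ee k (Suc (m k)) x"
  shows "psi ee gg nhat t x $ k = psi0m nhat m x $ k"
proof -
  have "arrival ee k (m k) x \<le> tau ee x" using assms(2) by (simp add: Dm_def)
  then have "arrival ee k (m k) x \<le> t + tau ee x" using assms(3) by simp
  moreover have "\<forall>n. ee k n x > 0" using assms(1) by (simp add: good_def)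
  ultimately have "jumps ee k (t + tau ee x) x = m k"
    using assms(4) by (intro jumps_eq) simp_all
  then show ?thesis by (simp add: psi_def psi0m_def phi_def)
qed

lemma comp_alg:
  fixes R G Q :: "real^'d^'d"
  shows "(transpose (R ** (G ** Q)) *v v) $ i = (\<Sum>a\<in>UNIV. \<Sum>b\<in>UNIV. (Q$a$i * (transpose R *v v)$b) * G$b$a)"
proof -
  define u where "u = transpose R *v v"
  have "transpose (R ** (G ** Q)) *v v = transpose Q *v (transpose G *v u)"
    unfolding u_def matrix_transpose_mul by (simp only: matrix_vector_mul_assoc matrix_mul_assoc)
  also have "\<dots> $ i = (\<Sum>a\<in>UNIV. Q$a$i * (\<Sum>b\<in>UNIV. G$b$a * u$b))"
    unfolding matrix_vector_mult_def transpose_def by simp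
  also have "\<dots> = (\<Sum>a\<in>UNIV. \<Sum>b\<in>UNIV. (Q$a$i * u$b) * G$b$a)"
    by (simp add: sum_distrib_left mult_ac)
  finally show ?thesis by (simp add: u_def)
qed

lemma K3: assumes "good x" "Dm m x" "\<not> (tau ee x + t < arrival ee k (Suc (m k)) x)"
  shows "jumps ee k (t + tau ee x) x \<ge> Suc (m k)"
    and "psi ee gg nhat t x $ k $ i = (\<Sum>a\<in>UNIV. \<Sum>b\<in>UNIV.
       (gprod gg k (m k) x $ a $ i * (transpose (gprodR gg k (Suc (m k)) (jumps ee k (t + tau ee x) x) x) *v nhat) $ b)
       * gg k (m k) x $ b $ a)"
proof -
  define s where "s = t + tau ee x"
  have pos: "\<forall>n. ee k n x > 0" using assms(1) by (simp add: good_def)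
  have a1: "arrival ee k (Suc (m k)) x \<le> s" using assms(3) by (simp add: s_def)
  have "arrival ee k 0 x \<le> arrival ee k (Suc (m k)) x" using arrival_mono[of ee k x 0 "Suc (m k)"] pos by simp
  then have a0: "arrival ee k 0 x \<le> s" using a1 by simp
  obtain c :: nat where "s < real c" using reals_Archimedean2 by blast
  moreover obtain n where "arrival ee k n x > real c" using assms(1) unfolding good_def by blast
  ultimately have "arrival ee k n x > s" by simp
  then obtain j where j: "arrival ee k j x \<le> s" "s < arrival ee k (Suc j) x"
    using exists_bracket[OF a0] by blast
  have J: "jumps ee k s x = j" by (rule jumps_eq[OF pos j])
  have "Suc (m k) \<le> j"
  proof (rule ccontr)
    assume "\<not> Suc (m k) \<le> j"
    then have "Suc j \<le> Suc (m k)" by simp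
    then have "arrival ee k (Suc j) x \<le> arrival ee k (Suc (m k)) x" using arrival_mono[of ee k x "Suc j" "Suc (m k)"] pos by simp
    then show False using a1 j by simp
  qed
  then show ge: "jumps ee k (t + tau ee x) x \<ge> Suc (m k)" using J by (simp add: s_def)
  have "gprod gg k (jumps ee k (t + tau ee x) x) x
      = gprodR gg k (Suc (m k)) (jumps ee k (t + tau ee x) x) x ** (gg k (m k) x ** gprod gg k (m k) x)"
    using gprod_split[OF ge, of gg k x] by simp
  then show "psi ee gg nhat t x $ k $ i = (\<Sum>a\<in>UNIV. \<Sum>b\<in>UNIV.
       (gprod gg k (m k) x $ a $ i * (transpose (gprodR gg k (Suc (m k)) (jumps ee k (t + tau ee x) x) x) *v nhat) $ b)
       * gg k (m k) x $ b $ a)"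
    unfolding psi_def phi_def vec_lambda_beta by (simp only: comp_alg)
qed

lemma SO_bound_psi0m: assumes "good x" "norm nhat = 1" shows "\<bar>psi0m nhat m x $ k $ i\<bar> \<le> 1"
proof -
  have "gprod gg k (m k) x \<in> SO" using assms(1) by (intro gprod_SO) (simp add: good_def)
  then show ?thesis using SO_vec[OF _ assms(2)] by (simp add: psi0m_def)
qed


definition Cp :: "('k::finite \<Rightarrow> nat) \<Rightarrow> 'k \<Rightarrow> ('k, 'd::finite) coord \<Rightarrow> bool" where
  "Cp m k x \<longleftrightarrow> (\<forall>k'. k' \<noteq> k \<longrightarrow> arrival ee k' (m k') x \<le> tau ee x \<and> tau ee x < arrival ee k' (Suc (m k')) x)
     \<and> arrival ee k (m k) x \<le> tau ee x"

definition cc :: "('k::finite \<Rightarrow> nat) \<Rightarrow> 'k \<Rightarrow> ('k, 'd::finite) coord \<Rightarrow> real" where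
  "cc m k x = tau ee x - arrival ee k (m k) x"

definition Wf :: "real^'d \<Rightarrow> (real^'d^'k) set \<Rightarrow> ('k::finite \<Rightarrow> nat) \<Rightarrow> 'k \<Rightarrow> 'd \<Rightarrow> ('k, 'd::finite) coord \<Rightarrow> real" where
  "Wf nhat A m k i x = indicator A (psi0m nhat m x) * clip (psi0m nhat m x $ k $ i)"

definition TN :: "real^'d \<Rightarrow> (real^'d^'k) set \<Rightarrow> ('k::finite \<Rightarrow> nat) \<Rightarrow> 'k \<Rightarrow> 'd \<Rightarrow> real \<Rightarrow> ('k, 'd::finite) coord \<Rightarrow> real" where
  "TN nhat A m k i t x = (if Cp m k x \<and> ee k (m k) x > cc m k x + t then Wf nhat A m k i x else 0)"

definition FF :: "real^'d \<Rightarrow> (real^'d^'k) set \<Rightarrow> ('k::finite \<Rightarrow> nat) \<Rightarrow> 'k \<Rightarrow> 'd \<Rightarrow> real \<Rightarrow> 'd \<Rightarrow> 'd \<Rightarrow> ('k, 'd::finite) coord \<Rightarrow> real" where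
  "FF nhat A m k i t a b x = (if Dm m x \<and> \<not> (tau ee x + t < arrival ee k (Suc (m k)) x)
     then indicator A (psi0m nhat m x) * clip (gprod gg k (m k) x $ a $ i)
        * clip ((transpose (gprodR gg k (Suc (m k)) (jumps ee k (t + tau ee x) x) x) *v nhat) $ b) else 0)"

definition hh :: "real^'d \<Rightarrow> (real^'d^'k) set \<Rightarrow> 'k::finite \<Rightarrow> 'd \<Rightarrow> real \<Rightarrow> ('k, 'd::finite) coord \<Rightarrow> real" where
  "hh nhat A k i t x = indicator A (psi ee gg nhat 0 x) * (psi ee gg nhat t x $ k $ i)"

lemma N_iff: "Dm m x \<and> tau ee x + t < arrival ee k (Suc (m k)) x \<longleftrightarrow> Cp m k x \<and> ee k (m k) x > cc m k x + t"
  if "0 \<le> t"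
proof
  assume L: "Dm m x \<and> tau ee x + t < arrival ee k (Suc (m k)) x"
  then have "arrival ee k (m k) x \<le> tau ee x" by (simp add: Dm_def)
  moreover have "ee k (m k) x > cc m k x + t" using L by (simp add: cc_def arrival_Suc)
  ultimately show "Cp m k x \<and> ee k (m k) x > cc m k x + t" using L by (simp add: Cp_def Dm_def)
next
  assume R: "Cp m k x \<and> ee k (m k) x > cc m k x + t"
  then have "tau ee x + t < arrival ee k (Suc (m k)) x" by (simp add: cc_def arrival_Suc)
  moreover have "arrival ee k (m k) x \<le> tau ee x" using R by (simp add: Cp_def)
  moreover have "tau ee x < arrival ee k (Suc (m k)) x" using calculation that by simp
  ultimately have "arrival ee k' (m k') x \<le> tau ee x \<and> tau ee x < arrival ee k' (Suc (m k')) x" for k'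
    using R by (cases "k' = k") (auto simp: Cp_def)
  then show "Dm m x \<and> tau ee x + t < arrival ee k (Suc (m k)) x"
    using \<open>tau ee x + t < _\<close> by (simp add: Dm_def)
qed

lemma P1:
  assumes "good x" "norm nhat = 1" "0 \<le> t"
  shows "(if Dm m x then hh nhat A k i t x else 0)
    = TN nhat A m k i t x + (\<Sum>a\<in>UNIV. \<Sum>b\<in>UNIV. FF nhat A m k i t a b x * clip (gg k (m k) x $ b $ a))"
proof (cases "Dm m x")
  case False
  then have "\<not> (Cp m k x \<and> ee k (m k) x > cc m k x + t)" using N_iff[OF assms(3)] by blast
  then have "TN nhat A m k i t x = 0" unfolding TN_def by (rule if_not_P)
  then show ?thesis using False by (simp add: FF_def)
next
  case D: True
  show ?thesis
  proof (cases "tau ee x + t < arrival ee k (Suc (m k)) x")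
    case True
    then have "Cp m k x \<and> ee k (m k) x > cc m k x + t" using N_iff[OF assms(3)] D by blast
    moreover have "hh nhat A k i t x = Wf nhat A m k i x"
      using K1[OF assms(1) D] K2[OF assms(1) D assms(3) True] SO_bound_psi0m[OF assms(1,2)]
      by (simp add: hh_def Wf_def clip_id)
    ultimately show ?thesis using D True by (simp add: TN_def FF_def)
  next
    case False
    then have "\<not> (Cp m k x \<and> ee k (m k) x > cc m k x + t)" using N_iff[OF assms(3)] D by blast
    then have t0: "TN nhat A m k i t x = 0" unfolding TN_def by (rule if_not_P)
    have SOg: "gg k n x \<in> SO" for n using assms(1) by (simp add: good_def)
    have b1: "\<bar>gprod gg k (m k) x $ a $ i\<bar> \<le> 1" for a
      by (rule SO_entry, rule gprod_SO) (simp add: SOg)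
    have b2: "\<bar>(transpose (gprodR gg k (Suc (m k)) (jumps ee k (t + tau ee x) x) x) *v nhat) $ b\<bar> \<le> 1" for b
      by (rule SO_vec[OF _ assms(2)], rule gprodR_SO) (simp add: SOg)
    have b3: "\<bar>gg k (m k) x $ b $ a\<bar> \<le> 1" for a b by (rule SO_entry[OF SOg])
    have "FF nhat A m k i t a b x * clip (gg k (m k) x $ b $ a) = indicator A (psi0m nhat m x) *
       ((gprod gg k (m k) x $ a $ i * (transpose (gprodR gg k (Suc (m k)) (jumps ee k (t + tau ee x) x) x) *v nhat) $ b)
       * gg k (m k) x $ b $ a)" for a b
      using D False using clip_id[OF b2[of b], simplified] by (simp add: FF_def clip_id b1 b3)
    then have "(\<Sum>a\<in>UNIV. \<Sum>b\<in>UNIV. FF nhat A m k i t a b x * clip (gg k (m k) x $ b $ a))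
      = indicator A (psi0m nhat m x) * psi ee gg nhat t x $ k $ i"
      unfolding K3(2)[OF assms(1) D False] by (simp add: sum_distrib_left)
    then show ?thesis using D t0 K1[OF assms(1) D] by (simp add: hh_def)
  qed
qed


lemma meas_gprodR[measurable]:
  assumes [measurable]: "\<And>k n. g k n \<in> borel_measurable N"
  shows "gprodR g k a b \<in> borel_measurable N"
  by (induction b) auto

lemma meas_gprodR_rand[measurable]:
  assumes [measurable]: "\<And>k n. g k n \<in> borel_measurable N" and J: "J \<in> measurable N (count_space UNIV)"
  shows "(\<lambda>w. gprodR g k a (J w) w) \<in> borel_measurable N"
  by (rule measurable_compose_countable[OF _ J]) simp

lemma eeP[measurable]: "ee k n \<in> borel_measurable PB" by simp
lemma ggP[measurable]: "gg k n \<in> borel_measurable PB" by simp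

lemma arrP[measurable]: "arrival ee k n \<in> borel_measurable PB" unfolding arrival_def by measurable
lemma tauP[measurable]: "tau ee \<in> borel_measurable PB" unfolding tau_def by measurable
lemma psiP[measurable]: "psi ee gg nhat t \<in> borel_measurable PB" by measurable

lemma arr_tau_le[measurable]: "Measurable.pred (PB :: ('k::finite, 'd::finite) coord measure) (\<lambda>x. arrival ee k n x \<le> tau ee x)"
  unfolding pred_def by (rule borel_measurable_le[OF arrP tauP])
lemma tau_arr_less[measurable]: "Measurable.pred (PB :: ('k::finite, 'd::finite) coord measure) (\<lambda>x. tau ee x < arrival ee k n x)"
  unfolding pred_def by (rule borel_measurable_less[OF tauP arrP])
lemma pred_all_finite: "(\<And>i::'i::finite. Measurable.pred M (P i)) \<Longrightarrow> Measurable.pred M (\<lambda>x. \<forall>i. P i x)"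
proof -
  assume "\<And>i::'i::finite. Measurable.pred M (P i)"
  then have "Measurable.pred M (\<lambda>x. \<forall>i\<in>UNIV. P i x)" by (intro pred_intros_finite) auto
  then show ?thesis by simp
qed
lemma DmP[measurable]: "Measurable.pred PB (Dm m)" unfolding Dm_def
  by (intro pred_all_finite pred_intros_logic) measurable
lemma CpP[measurable]: "Measurable.pred PB (Cp m k)" unfolding Cp_def
  by (intro pred_all_finite pred_intros_logic) measurable
lemma ccP[measurable]: "cc m k \<in> borel_measurable PB" unfolding cc_def by measurable
lemma psi0mP[measurable]: "psi0m nhat m \<in> borel_measurable PB"
  unfolding psi0m_def by (intro meas_vec) (simp only: vec_lambda_beta, measurable)

context fixes A :: "(real^'d::finite^'k::finite) set" assumes A[measurable]: "A \<in> sets borel"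
begin
lemma WfP[measurable]: "Wf nhat A m k i \<in> borel_measurable PB" unfolding Wf_def by measurable
lemma TNP[measurable]: "TN nhat A m k i t \<in> borel_measurable PB" unfolding TN_def by measurable
lemma hhP[measurable]: "hh nhat A k i t \<in> borel_measurable PB" unfolding hh_def by measurable
lemma FFP[measurable]: "FF nhat A m k i t a b \<in> borel_measurable PB" unfolding FF_def by measurable
end

lemma goodP:
  assumes SOm: "(SO :: (real^'d::finite^'d) set) \<in> sets borel"
  shows "Measurable.pred (PB :: ('k::finite, 'd) coord measure) good"
proof -
  have [measurable]: "Measurable.pred (PB :: ('k, 'd) coord measure) (\<lambda>x. gg k n x \<in> SO)" for k :: 'k and n
    using SOm by measurable
  have [measurable]: "Measurable.pred (PB :: ('k, 'd) coord measure) (\<lambda>x. real c < arrival ee k n x)" for k :: 'k and n c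
    unfolding pred_def by (rule borel_measurable_less) measurable
  show ?thesis unfolding good_def
    by (intro pred_intros_logic pred_all_finite) measurable
qed


lemma psi_bound: assumes "good x" "norm nhat = 1" shows "\<bar>psi ee gg nhat t x $ k $ i\<bar> \<le> 1"
proof -
  have "gprod gg k n x \<in> SO" for n using assms(1) by (intro gprod_SO) (simp add: good_def)
  then show ?thesis using SO_vec[OF _ assms(2)] by (simp add: psi_def phi_def)
qed

lemma hh_bound: assumes "good x" "norm nhat = 1" shows "\<bar>hh nhat A k i t x\<bar> \<le> 1"
  using psi_bound[OF assms, of t k i] by (simp add: hh_def indicator_def)

lemma Wf_bound: "\<bar>Wf nhat A m k i x\<bar> \<le> 1"
  using clip_bound by (simp add: Wf_def indicator_def abs_mult)

lemma TN_bound: "\<bar>TN nhat A m k i t x\<bar> \<le> 1"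
  by (simp add: TN_def Wf_bound)

lemma arrival_Xv[simp]: "arrival ee k n (\<lambda>i. Xv e g i w) = arrival e k n w"
  by (simp add: arrival_def)

lemma FF_bound: "\<bar>FF nhat A m k i t a b x\<bar> \<le> 1"
proof -
  have "\<bar>clip u * clip v\<bar> \<le> 1" for u v
    using clip_bound[of u] clip_bound[of v] by (simp add: abs_mult mult_le_one)
  then show ?thesis by (simp add: FF_def indicator_def abs_mult mult.assoc)
qed

context setting begin

lemma AE_good: "AE \<omega> in M. good (XX \<omega>)"
  using AE_pos AE_SO AE_unb by eventually_elim (simp add: good_def XX_def)

lemma goodM[measurable]: "Measurable.pred M (\<lambda>\<omega>. good (XX \<omega>))"
  using measurable_compose[OF XX_meas goodP[OF SO_sets]] by (simp add: comp_def)

lemma intB: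
  fixes f :: "('k, 'd) coord \<Rightarrow> real"
  assumes "f \<in> borel_measurable PB" "AE \<omega> in M. \<bar>f (XX \<omega>)\<bar> \<le> 1"
  shows "integrable M (\<lambda>\<omega>. f (XX \<omega>))"
proof (rule integrable_const_bound[where B=1])
  show "AE \<omega> in M. norm (f (XX \<omega>)) \<le> 1" using assms(2) by simp
  show "(\<lambda>\<omega>. f (XX \<omega>)) \<in> borel_measurable M" using measurable_compose[OF XX_meas assms(1)] by (simp add: comp_def)
qed

lemma I_term:
  assumes A[measurable]: "A \<in> sets borel" and t: "0 \<le> t"
  shows "(\<integral>\<omega>. (if Dm m (XX \<omega>) then hh nhat A k i t (XX \<omega>) else 0) \<partial>M)
    = (\<integral>\<omega>. TN nhat A m k i t (XX \<omega>) \<partial>M)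
      + (\<Sum>a\<in>UNIV. \<Sum>b\<in>UNIV. (\<integral>\<omega>. FF nhat A m k i t a b (XX \<omega>) * clip (gg k (m k) (XX \<omega>) $ b $ a) \<partial>M))"
proof -
  have iT: "integrable M (\<lambda>\<omega>. TN nhat A m k i t (XX \<omega>))"
    by (rule intB) (auto simp: TN_bound)
  have iF: "integrable M (\<lambda>\<omega>. FF nhat A m k i t a b (XX \<omega>) * clip (gg k (m k) (XX \<omega>) $ b $ a))" for a b
  proof (rule intB)
    show "(\<lambda>x. FF nhat A m k i t a b x * clip (gg k (m k) x $ b $ a)) \<in> borel_measurable PB" by measurable
    show "AE \<omega> in M. \<bar>FF nhat A m k i t a b (XX \<omega>) * clip (gg k (m k) (XX \<omega>) $ b $ a)\<bar> \<le> 1"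
      by (rule AE_I2) (metis abs_ge_zero abs_mult mult_le_one FF_bound clip_bound)
  qed
  have "(\<integral>\<omega>. (if Dm m (XX \<omega>) then hh nhat A k i t (XX \<omega>) else 0) \<partial>M)
    = (\<integral>\<omega>. TN nhat A m k i t (XX \<omega>) + (\<Sum>a\<in>UNIV. \<Sum>b\<in>UNIV. FF nhat A m k i t a b (XX \<omega>) * clip (gg k (m k) (XX \<omega>) $ b $ a)) \<partial>M)"
  proof (rule integral_cong_AE)
    show "AE \<omega> in M. (if Dm m (XX \<omega>) then hh nhat A k i t (XX \<omega>) else 0) = TN nhat A m k i t (XX \<omega>) + (\<Sum>a\<in>UNIV. \<Sum>b\<in>UNIV. FF nhat A m k i t a b (XX \<omega>) * clip (gg k (m k) (XX \<omega>) $ b $ a))"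
      using AE_good by eventually_elim (rule P1[OF _ nh t])
  qed measurable
  also have "\<dots> = (\<integral>\<omega>. TN nhat A m k i t (XX \<omega>) \<partial>M)
      + (\<Sum>a\<in>UNIV. \<Sum>b\<in>UNIV. (\<integral>\<omega>. FF nhat A m k i t a b (XX \<omega>) * clip (gg k (m k) (XX \<omega>) $ b $ a) \<partial>M))"
    using iT iF by (simp add: integral_sum)
  finally show ?thesis .
qed

end


lemma ee_upd_Inr[simp]: "ee k n (x(Inr p := v)) = ee k n x" by (simp add: ee_def)
lemma gg_upd_Inl[simp]: "gg k n (x(Inl p := v)) = gg k n x" by (simp add: gg_def)

lemma ee_inv:
  assumes "\<And>k n. ee k n x = ee k n y"
  shows "arrival ee k n x = arrival ee k n y" "tau ee x = tau ee y" "jumps ee k s x = jumps ee k s y"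
    "Dm m x = Dm m y" "Cp m k x = Cp m k y" "cc m k x = cc m k y"
proof -
  show a: "arrival ee k n x = arrival ee k n y" for k n by (simp add: arrival_def assms)
  show t: "tau ee x = tau ee y" by (simp add: tau_def a)
  show "jumps ee k s x = jumps ee k s y" by (simp add: jumps_def a)
  show "Dm m x = Dm m y" by (simp add: Dm_def a t)
  show "Cp m k x = Cp m k y" by (simp add: Cp_def a t)
  show "cc m k x = cc m k y" by (simp add: cc_def a t)
qed

lemma FF_upd: "FF nhat A m k i t a b (x(Inr (k, m k) := v)) = FF nhat A m k i t a b x"
proof -
  let ?y = "x(Inr (k, m k) := v)"
  have E: "\<And>k n. ee k n ?y = ee k n x" by simp
  have p: "psi0m nhat m ?y = psi0m nhat m x"
    unfolding psi0m_def by (intro arg_cong[where f=vec_lambda] ext arg_cong2[where f="(*v)"] arg_cong[where f=transpose] gprod_cong refl)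
      (auto simp: gg_def)
  have q: "gprod gg k (m k) ?y = gprod gg k (m k) x" by (rule gprod_cong) (auto simp: gg_def)
  have r: "gprodR gg k (Suc (m k)) J ?y = gprodR gg k (Suc (m k)) J x" for J by (rule gprodR_cong) (auto simp: gg_def)
  show ?thesis unfolding FF_def ee_inv[OF E] p q r ..
qed

context setting begin

lemma mean_clip0: "(\<integral>\<omega>. clip (g k n \<omega> $ b $ a) \<partial>M) = 0"
proof -
  have "(\<integral>\<omega>. clip (g k n \<omega> $ b $ a) \<partial>M) = (\<integral>\<omega>. g k n \<omega> $ b $ a \<partial>M)"
  proof (rule integral_cong_AE)
    show "AE \<omega> in M. clip (g k n \<omega> $ b $ a) = g k n \<omega> $ b $ a"
      using AE_SO by eventually_elim (simp add: clip_id SO_entry)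
  qed measurable
  also have "\<dots> = (\<integral>B. B $ b $ a \<partial>distr M borel (g k n))"
    by (rule integral_distr[symmetric]) measurable
  also have "\<dots> = 0" by (rule haar_mean0[OF d2 gh])
  finally show ?thesis .
qed

lemma I_J:
  assumes A[measurable]: "A \<in> sets borel"
  shows "(\<integral>\<omega>. FF nhat A m k i t a b (XX \<omega>) * clip (gg k (m k) (XX \<omega>) $ b $ a) \<partial>M) = 0"
proof -
  define i0 where "i0 = (Inr (k, m k) :: ('k \<times> nat) + ('k \<times> nat))"
  have "(\<integral>\<omega>. FF nhat A m k i t a b (XX \<omega>) * clip (gg k (m k) (XX \<omega>) $ b $ a) \<partial>M)
    = (\<integral>\<omega>. (\<integral>\<omega>'. FF nhat A m k i t a b ((XX \<omega>)(i0 := XX \<omega>' i0)) * clip (gg k (m k) ((XX \<omega>)(i0 := XX \<omega>' i0)) $ b $ a) \<partial>M) \<partial>M)"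
  proof (rule split_coord[where C=1])
    show "(\<lambda>x. FF nhat A m k i t a b x * clip (gg k (m k) x $ b $ a)) \<in> borel_measurable PB" by measurable
    show "\<bar>FF nhat A m k i t a b x * clip (gg k (m k) x $ b $ a)\<bar> \<le> 1" for x
      by (metis abs_ge_zero abs_mult mult_le_one FF_bound clip_bound)
  qed
  also have "\<dots> = (\<integral>\<omega>. FF nhat A m k i t a b (XX \<omega>) * (\<integral>\<omega>'. clip (g k (m k) \<omega>' $ b $ a) \<partial>M) \<partial>M)"
    by (simp add: i0_def FF_upd gg_def XX_def Xv_def)
  also have "\<dots> = 0" by (simp add: mean_clip0)
  finally show ?thesis .
qed

end


lemma TN_zero: assumes "m k = 0" "0 \<le> t" shows "TN nhat A m k i t x = 0"
proof -
  have "ee k 0 x \<le> tau ee x" using arr1_le_tau[of ee k x] by (simp add: arrival_def)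
  then have "\<not> (ee k (m k) x > cc m k x + t)" using assms by (simp add: cc_def)
  then show ?thesis by (simp add: TN_def)
qed

lemma TN_upd:
  assumes "m k \<ge> 1"
  shows "TN nhat A m k i t (x(Inl (k, m k) := v)) = (if Cp m k x \<and> v $ undefined $ undefined > cc m k x + t then Wf nhat A m k i x else 0)"
proof -
  let ?y = "x(Inl (k, m k) := v)"
  have E: "ee k' n ?y = (if k' = k \<and> n = m k then v $ undefined $ undefined else ee k' n x)" for k' n
    by (auto simp: ee_def)
  have a: "arrival ee k' n ?y = arrival ee k' n x" if "k' \<noteq> k \<or> n \<le> m k" for k' n
    unfolding arrival_def using that by (intro sum.cong refl) (auto simp: E)
  have t: "tau ee ?y = tau ee x" unfolding tau_def using a[of _ 1] assms by (metis One_nat_def)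
  have C: "Cp m k ?y = Cp m k x" by (simp add: Cp_def a t)
  have c: "cc m k ?y = cc m k x" by (simp add: cc_def a t)
  have W: "Wf nhat A m k i ?y = Wf nhat A m k i x"
  proof -
    have "gprod gg k' (m k') ?y = gprod gg k' (m k') x" for k' by (rule gprod_cong) simp
    then show ?thesis by (simp add: Wf_def psi0m_def)
  qed
  show ?thesis unfolding TN_def C c W by (simp add: E)
qed

context setting begin

lemma inner_exp:
  assumes "C \<Longrightarrow> 0 \<le> s"
  shows "(\<integral>\<omega>'. (if C \<and> e k n \<omega>' > s then W else 0) \<partial>M) = (if C then W * exp (- s * lam) else 0)"
proof (cases C)
  case True
  have "(\<integral>\<omega>'. (if C \<and> e k n \<omega>' > s then W else 0) \<partial>M) = (\<integral>\<omega>'. W * indicator {\<omega>'\<in>space M. s < e k n \<omega>'} \<omega>' \<partial>M)"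
    by (rule Bochner_Integration.integral_cong) (auto simp: True indicator_def)
  also have "\<dots> = W * prob {\<omega>'\<in>space M. s < e k n \<omega>'}"
    by (simp add: Int_absorb2)
  also have "\<dots> = W * exp (- s * lam)"
    using exponential_distributedD_gt[OF ed[of k n] assms[OF True] lam] by simp
  finally show ?thesis using True by simp
qed simp

lemma I_N:
  assumes A[measurable]: "A \<in> sets borel" and t: "0 \<le> t"
  shows "(\<integral>\<omega>. TN nhat A m k i t (XX \<omega>) \<partial>M) = exp (- lam * t) * (\<integral>\<omega>. TN nhat A m k i 0 (XX \<omega>) \<partial>M)"
proof (cases "m k = 0")
  case True
  then show ?thesis using t by (simp add: TN_zero)
next
  case False
  then have mk: "m k \<ge> 1" by simp
  define i1 where "i1 = (Inl (k, m k) :: ('k \<times> nat) + ('k \<times> nat))"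
  have XXi1: "XX \<omega>' i1 $ undefined $ undefined = e k (m k) \<omega>'" for \<omega>'
    by (simp add: i1_def XX_def Xv_def mat_def)
  have cc0: "Cp m k x \<Longrightarrow> 0 \<le> cc m k x" for x :: "('k, 'd) coord" by (simp add: Cp_def cc_def)
  have gen: "(\<integral>\<omega>. TN nhat A m k i s (XX \<omega>) \<partial>M)
      = (\<integral>\<omega>. (if Cp m k (XX \<omega>) then Wf nhat A m k i (XX \<omega>) * exp (- (cc m k (XX \<omega>) + s) * lam) else 0) \<partial>M)"
    if s: "0 \<le> s" for s
  proof -
    have "(\<integral>\<omega>. TN nhat A m k i s (XX \<omega>) \<partial>M)
      = (\<integral>\<omega>. (\<integral>\<omega>'. TN nhat A m k i s ((XX \<omega>)(i1 := XX \<omega>' i1)) \<partial>M) \<partial>M)"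
      by (rule split_coord[where C=1]) (auto simp: TN_bound)
    also have "\<dots> = (\<integral>\<omega>. (\<integral>\<omega>'. (if Cp m k (XX \<omega>) \<and> e k (m k) \<omega>' > cc m k (XX \<omega>) + s then Wf nhat A m k i (XX \<omega>) else 0) \<partial>M) \<partial>M)"
      unfolding i1_def TN_upd[of m k, OF mk] XXi1[unfolded i1_def] ..
    also have "\<dots> = (\<integral>\<omega>. (if Cp m k (XX \<omega>) then Wf nhat A m k i (XX \<omega>) * exp (- (cc m k (XX \<omega>) + s) * lam) else 0) \<partial>M)"
      using s cc0 by (subst inner_exp) auto
    finally show ?thesis .
  qed
  have "(\<integral>\<omega>. TN nhat A m k i t (XX \<omega>) \<partial>M)
     = (\<integral>\<omega>. exp (- lam * t) * (if Cp m k (XX \<omega>) then Wf nhat A m k i (XX \<omega>) * exp (- (cc m k (XX \<omega>) + 0) * lam) else 0) \<partial>M)"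
    unfolding gen[OF t]
    by (rule Bochner_Integration.integral_cong) (auto simp: algebra_simps exp_add[symmetric])
  also have "\<dots> = exp (- lam * t) * (\<integral>\<omega>. TN nhat A m k i 0 (XX \<omega>) \<partial>M)"
    unfolding gen[OF order_refl] by simp
  finally show ?thesis .
qed

end


context setting begin

lemma hh_int: "A \<in> sets borel \<Longrightarrow> integrable M (\<lambda>\<omega>. hh nhat A k i t (XX \<omega>))"
  by (rule intB) (auto intro: AE_mp[OF AE_good] simp: hh_bound[OF _ nh])

lemma I_m:
  assumes A[measurable]: "A \<in> sets borel" and t: "0 \<le> t"
  shows "(\<integral>\<omega>. (if Dm m (XX \<omega>) then hh nhat A k i t (XX \<omega>) else 0) \<partial>M)
    = exp (- lam * t) * (\<integral>\<omega>. (if Dm m (XX \<omega>) then hh nhat A k i 0 (XX \<omega>) else 0) \<partial>M)"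
  by (simp add: I_term[OF A t] I_term[OF A order_refl] I_J[OF A] I_N[OF A t])

lemma main_eq:
  assumes A[measurable]: "A \<in> sets borel" and t: "0 \<le> t"
  shows "(\<integral>\<omega>. hh nhat A k i t (XX \<omega>) \<partial>M) = exp (- lam * t) * (\<integral>\<omega>. hh nhat A k i 0 (XX \<omega>) \<partial>M)"
proof -
  define c where "c = exp (- lam * t)"
  define \<phi> where "\<phi> \<omega> = hh nhat A k i t (XX \<omega>) - c * hh nhat A k i 0 (XX \<omega>)" for \<omega>
  have \<phi>m[measurable]: "\<phi> \<in> borel_measurable M" unfolding \<phi>_def by measurable
  have \<phi>i: "integrable M \<phi>" unfolding \<phi>_def using hh_int[OF A] by auto
  define D where "D n = {\<omega> \<in> space M. good (XX \<omega>) \<and> Dm (from_nat n) (XX \<omega>) \<and> to_nat (from_nat n :: 'k \<Rightarrow> nat) = n}" for n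
  have Dm[measurable]: "D n \<in> sets M" for n unfolding D_def by measurable
  have disj: "D i \<inter> D j = {}" if "i \<noteq> j" for i j
  proof (rule ccontr)
    assume "D i \<inter> D j \<noteq> {}"
    then obtain \<omega> where "\<omega> \<in> D i" "\<omega> \<in> D j" by blast
    then have "(from_nat i :: 'k \<Rightarrow> nat) = from_nat j" by (auto simp: D_def intro: Dm_uniq)
    then have "i = j" using \<open>\<omega> \<in> D i\<close> \<open>\<omega> \<in> D j\<close> by (metis (mono_tags, lifting) D_def mem_Collect_eq)
    then show False using that by simp
  qed
  have U: "AE \<omega> in M. \<omega> \<in> (\<Union>n. D n)"
    using AE_good AE_space
  proof eventually_elim
    case (elim \<omega>)
    obtain m :: "'k \<Rightarrow> nat" where "Dm m (XX \<omega>)" using Dm_ex[OF elim(1)] by blast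
    then have "\<omega> \<in> D (to_nat m)" using elim by (simp add: D_def)
    then show ?case by blast
  qed
  have "(\<integral>\<omega>. \<phi> \<omega> \<partial>M) = (LINT \<omega>:(\<Union>n. D n)|M. \<phi> \<omega>)"
    unfolding set_lebesgue_integral_def
    by (rule integral_cong_AE) (use U in \<open>auto simp: indicator_def\<close>)
  also have "\<dots> = (\<Sum>n. (LINT \<omega>:(D n)|M. \<phi> \<omega>))"
  proof (rule lebesgue_integral_countable_add)
    show "set_integrable M (\<Union>n. D n) \<phi>"
      unfolding set_integrable_def by (rule integrable_mult_indicator) (auto simp: \<phi>i)
  qed (use disj in auto)
  also have "\<dots> = (\<Sum>n. 0)"
  proof (intro arg_cong[where f=suminf] ext)
    fix n
    show "(LINT \<omega>:(D n)|M. \<phi> \<omega>) = 0"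
    proof (cases "to_nat (from_nat n :: 'k \<Rightarrow> nat) = n")
      case False
      then have "D n = {}" by (simp add: D_def)
      then show ?thesis by (simp add: set_lebesgue_integral_def)
    next
      case True
      define m :: "'k \<Rightarrow> nat" where "m = from_nat n"
      have "(LINT \<omega>:(D n)|M. \<phi> \<omega>) = (\<integral>\<omega>. (if Dm m (XX \<omega>) then hh nhat A k i t (XX \<omega>) else 0)
          - c * (if Dm m (XX \<omega>) then hh nhat A k i 0 (XX \<omega>) else 0) \<partial>M)"
        unfolding set_lebesgue_integral_def
        by (rule integral_cong_AE) (use AE_good in \<open>auto simp: D_def m_def True \<phi>_def indicator_def\<close>)
      also have "\<dots> = (\<integral>\<omega>. (if Dm m (XX \<omega>) then hh nhat A k i t (XX \<omega>) else 0) \<partial>M)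
          - c * (\<integral>\<omega>. (if Dm m (XX \<omega>) then hh nhat A k i 0 (XX \<omega>) else 0) \<partial>M)"
      proof -
        have "integrable M (\<lambda>\<omega>. (if Dm m (XX \<omega>) then hh nhat A k i s (XX \<omega>) else 0))" for s
        proof -
          have "integrable M (\<lambda>\<omega>. (\<lambda>x. if Dm m x then hh nhat A k i s x else 0) (XX \<omega>))"
            by (rule intB) (auto intro: AE_mp[OF AE_good] simp: hh_bound[OF _ nh])
          then show ?thesis by simp
        qed
        then show ?thesis by simp
      qed
      also have "\<dots> = 0" by (simp add: I_m[OF A t] c_def)
      finally show ?thesis .
    qed
  qed
  also have "\<dots> = 0" by simp
  finally have "(\<integral>\<omega>. \<phi> \<omega> \<partial>M) = 0" .
  then show ?thesis unfolding \<phi>_def c_def using hh_int[OF A] by simp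
qed

end


context setting begin

lemma final:
  "\<forall>t\<ge>0. \<forall>k i. AE w in M.
     real_cond_exp M (vimage_algebra (space M) (psi e g nhat 0) borel)
       (\<lambda>w. psi e g nhat t w $ k $ i) w
     = exp (- lam * t) * (psi e g nhat 0 w $ k $ i)"
proof (intro allI impI)
  fix t :: real and k :: 'k and i :: 'd
  assume t: "0 \<le> t"
  define F where "F = vimage_algebra (space M) (psi e g nhat 0) borel"
  have p0[measurable]: "psi e g nhat s \<in> borel_measurable M" for s by (rule meas_psi) measurable
  have tr: "psi e g nhat s w = psi ee gg nhat s (XX w)" for s w unfolding XX_def by (rule psi_transfer)
  have sF: "sets F = {psi e g nhat 0 -` A \<inter> space M | A. A \<in> sets borel}"
    unfolding F_def by (rule sets_vimage_algebra2) simp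
  have sub: "subalgebra M F"
    unfolding subalgebra_def
  proof
    show "sets F \<subseteq> sets M" unfolding sF using measurable_sets[OF p0[of 0]] by blast
  qed (simp add: F_def)
  interpret S: finite_measure_subalgebra M F by unfold_locales (rule sub)
  have intp: "integrable M (\<lambda>w. psi e g nhat s w $ k $ i)" for s
  proof -
    have "integrable M (\<lambda>w. (\<lambda>x. psi ee gg nhat s x $ k $ i) (XX w))"
      by (rule intB) (auto intro: AE_mp[OF AE_good] simp: psi_bound[OF _ nh])
    then show ?thesis by (simp add: tr)
  qed
  have "AE w in M. real_cond_exp M F (\<lambda>w. psi e g nhat t w $ k $ i) w = exp (- lam * t) * (psi e g nhat 0 w $ k $ i)"
  proof (rule S.real_cond_exp_charact)
    fix A' assume "A' \<in> sets F"
    then obtain A where A[measurable]: "A \<in> sets borel" and A': "A' = psi e g nhat 0 -` A \<inter> space M"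
      unfolding sF by blast
    have ind: "indicator A' w = (indicator A (psi ee gg nhat 0 (XX w)) :: real)" if "w \<in> space M" for w
      using that unfolding A' tr by (simp add: indicator_def)
    have "(\<integral>w\<in>A'. psi e g nhat t w $ k $ i \<partial>M) = (\<integral>w. hh nhat A k i t (XX w) \<partial>M)"
      unfolding set_lebesgue_integral_def
      by (rule Bochner_Integration.integral_cong) (simp_all only: ind hh_def tr real_scaleR_def)
    also have "\<dots> = exp (- lam * t) * (\<integral>w. hh nhat A k i 0 (XX w) \<partial>M)" by (rule main_eq[OF A t])
    also have "\<dots> = (\<integral>w\<in>A'. exp (- lam * t) * (psi e g nhat 0 w $ k $ i) \<partial>M)"
      unfolding set_lebesgue_integral_def integral_mult_right_zero[symmetric]
      by (rule Bochner_Integration.integral_cong) (simp_all only: ind hh_def tr real_scaleR_def mult_ac)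
    finally show "(\<integral>w\<in>A'. psi e g nhat t w $ k $ i \<partial>M) = (\<integral>w\<in>A'. exp (- lam * t) * (psi e g nhat 0 w $ k $ i) \<partial>M)" .
  next
    show "integrable M (\<lambda>w. psi e g nhat t w $ k $ i)" by (rule intp)
    show "integrable M (\<lambda>w. exp (- lam * t) * (psi e g nhat 0 w $ k $ i))" using intp by simp
    have "psi e g nhat 0 \<in> measurable F borel"
      unfolding F_def by (rule measurable_vimage_algebra1) simp
    then show "(\<lambda>w. exp (- lam * t) * (psi e g nhat 0 w $ k $ i)) \<in> borel_measurable F" by measurable
  qed
  then show "AE w in M. real_cond_exp M (vimage_algebra (space M) (psi e g nhat 0) borel) (\<lambda>w. psi e g nhat t w $ k $ i) w = exp (- lam * t) * (psi e g nhat 0 w $ k $ i)"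
    by (simp add: F_def)
qed

end

theorem mainTheorem5:
  fixes M :: "'w measure"
    and e :: "'k::finite \<Rightarrow> nat \<Rightarrow> 'w \<Rightarrow> real"
    and g :: "'k \<Rightarrow> nat \<Rightarrow> 'w \<Rightarrow> real^'d^'d"
    and nhat :: "real^'d"
    and lam :: real
  assumes "prob_space M"
    and "CARD('d) \<ge> 2"
    and "lam > 0"
    and "norm nhat = 1"
    and "\<And>k n. distributed M lborel (e k n) (exponential_density lam)"
    and "\<And>k n. g k n \<in> borel_measurable M"
    and "\<And>k n. SO_haar (distr M borel (g k n))"
    and "all_indep M e g"
  shows "\<forall>t\<ge>0. \<forall>k i. AE w in M.
           real_cond_exp M (vimage_algebra (space M) (psi e g nhat 0) borel)
             (\<lambda>w. psi e g nhat t w $ k $ i) w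
           = exp (- lam * t) * (psi e g nhat 0 w $ k $ i)"
proof -
  interpret setting M e g nhat lam
    by (rule setting.intro[OF assms(1) setting_axioms.intro[OF assms(2-8)]])
  show ?thesis by (rule final)
qed


end
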